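(* Let $A_p\in C[0,\infty)$ be real-valued and consider the Maxwell--Bloch system on $\mathbb X=\mathbb R^2\times S^3$, \[ \dot A=B,\quad \dot B=-\Omega^2A-\sigma B+cj,\quad i\hbar\dot C_1=\hbar\omega_1C_1+iaC_2,\quad i\hbar\dot C_2=\hbar\omega_2C_2-iaC_1, \] with $j=2q\,\mathrm{Im}[\overline{C_1}C_2]$, $a(t)=\frac qc[A(t)+A_p(t)]$, and its reduced dynamics $\dot Y=F(Y,t)$ on $\mathbb Y=\mathbb R^2\times S^2$. Let $T>0$, let $Y(t)=(A(t),B(t),C_*(t))$ be a $T$-periodic solution of the reduced dynamics, and let $\hat Y(t)=(\hat A(t),\hat B(t),\hat C(t))$ be the solution of the Maxwell--Bloch system with any initial state $\hat Y(0)\in\Pi^{-1}(Y(0))$. Then $(\hat A(t),\hat B(t))$, the current $j(t)=2q\,\mathrm{Im}[\overline{\hat C_1(t)}\hat C_2(t)]$ and the population inversion $I(t)=|\hat C_2(t)|^2-|\hat C_1(t)|^2$ are $T$-periodic, while for every $t\ge0$ there is $\theta(t)\in[0,2\pi]$ with $\hat C(t+T)=e^{i\theta(t)}\hat C(t)$.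
   Context: Parameters: $\Omega,\sigma,c,\hbar,p>0$, real $\omega_2>\omega_1$, $\omega=\omega_2-\omega_1$, $q=\omega p$. $S^3=\{C=(C_1,C_2)\in\mathbb C^2:|C_1|^2+|C_2|^2=1\}$. $U(1)$ acts on $\mathbb X$ by $(A,B,C)\mapsto(A,B,e^{i\theta}C)$, commuting with the flow. $\Pi(A,B,C)=(A,B,h(C))$ with $h:S^3\to S^2$ the Hopf fibration identifies $\mathbb X/U(1)$ with $\mathbb Y=\mathbb R^2\times S^2$; the reduced dynamics $\dot Y=F(Y,t)$ is the induced vector field on $\mathbb Y$, so that $\Pi$ maps Maxwell--Bloch solutions to reduced solutions. *)

theory Defs
  imports "HOL-Analysis.Analysis"
begin

type_synonym mb_state = "real \<times> real \<times> (complex \<times> complex)"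
type_synonym red_state = "real \<times> real \<times> (real \<times> real \<times> real)"

definition S3 :: "(complex \<times> complex) set" where
  "S3 = {C. (cmod (fst C))\<^sup>2 + (cmod (snd C))\<^sup>2 = 1}"

definition S2 :: "(real \<times> real \<times> real) set" where
  "S2 = {(x, y, z). x\<^sup>2 + y\<^sup>2 + z\<^sup>2 = 1}"

definition MB_space :: "mb_state set" where
  "MB_space = UNIV \<times> UNIV \<times> S3"

definition red_space :: "red_state set" where
  "red_space = UNIV \<times> UNIV \<times> S2"

definition hopf :: "complex \<times> complex \<Rightarrow> real \<times> real \<times> real" where
  "hopf C = (2 * Re (cnj (fst C) * snd C), 2 * Im (cnj (fst C) * snd C),
             (cmod (fst C))\<^sup>2 - (cmod (snd C))\<^sup>2)"

definition Pi_map :: "mb_state \<Rightarrow> red_state" where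
  "Pi_map X = (fst X, fst (snd X), hopf (snd (snd X)))"

definition MB_field ::
  "real \<Rightarrow> real \<Rightarrow> real \<Rightarrow> real \<Rightarrow> real \<Rightarrow> real \<Rightarrow> real \<Rightarrow> (real \<Rightarrow> real)
   \<Rightarrow> real \<Rightarrow> mb_state \<Rightarrow> mb_state" where
  "MB_field \<Omega> \<sigma> c hbar p \<omega>1 \<omega>2 Ap t X =
    (let q = (\<omega>2 - \<omega>1) * p;
         A = fst X; B = fst (snd X); C1 = fst (snd (snd X)); C2 = snd (snd (snd X));
         j = 2 * q * Im (cnj C1 * C2);
         a = q / c * (A + Ap t)
     in (B,
         - (\<Omega>\<^sup>2) * A - \<sigma> * B + c * j,
         ((complex_of_real (hbar * \<omega>1) * C1 + \<i> * complex_of_real a * C2) / (\<i> * complex_of_real hbar),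
          (complex_of_real (hbar * \<omega>2) * C2 - \<i> * complex_of_real a * C1) / (\<i> * complex_of_real hbar))))"

definition MB_solution ::
  "real \<Rightarrow> real \<Rightarrow> real \<Rightarrow> real \<Rightarrow> real \<Rightarrow> real \<Rightarrow> real \<Rightarrow> (real \<Rightarrow> real)
   \<Rightarrow> (real \<Rightarrow> mb_state) \<Rightarrow> bool" where
  "MB_solution \<Omega> \<sigma> c hbar p \<omega>1 \<omega>2 Ap Xs \<longleftrightarrow>
     (\<forall>t\<ge>0. Xs t \<in> MB_space \<and>
        (Xs has_vector_derivative MB_field \<Omega> \<sigma> c hbar p \<omega>1 \<omega>2 Ap t (Xs t)) (at t within {0..}))"

text \<open>Reduced dynamics Y' = F(Y,t): F is the vector field on Y = R^2 x S^2 induced by Pi,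
  i.e. F(Pi X, t) = D Pi_X (V(X,t)) for every X in the fibre (well defined by U(1)-equivariance).\<close>
definition red_solution ::
  "real \<Rightarrow> real \<Rightarrow> real \<Rightarrow> real \<Rightarrow> real \<Rightarrow> real \<Rightarrow> real \<Rightarrow> (real \<Rightarrow> real)
   \<Rightarrow> (real \<Rightarrow> red_state) \<Rightarrow> bool" where
  "red_solution \<Omega> \<sigma> c hbar p \<omega>1 \<omega>2 Ap Ys \<longleftrightarrow>
     (\<forall>t\<ge>0. Ys t \<in> red_space \<and>
        (\<forall>X\<in>MB_space. Pi_map X = Ys t \<longrightarrow>
           (Ys has_vector_derivative
              frechet_derivative Pi_map (at X) (MB_field \<Omega> \<sigma> c hbar p \<omega>1 \<omega>2 Ap t X))
           (at t within {0..})))"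

end

theory Submission
  imports Defs
begin

definition LPi :: "mb_state \<Rightarrow> mb_state \<Rightarrow> red_state" where
  "LPi X D = (fst D, fst (snd D),
     (2 * Re (cnj (fst (snd (snd X))) * snd (snd (snd D)) + cnj (fst (snd (snd D))) * snd (snd (snd X))),
      2 * Im (cnj (fst (snd (snd X))) * snd (snd (snd D)) + cnj (fst (snd (snd D))) * snd (snd (snd X))),
      2 * Re (cnj (fst (snd (snd X))) * fst (snd (snd D))) - 2 * Re (cnj (snd (snd (snd X))) * snd (snd (snd D)))))"

lemma hopf_alt: "hopf C = (2 * Re (cnj (fst C) * snd C), 2 * Im (cnj (fst C) * snd C),
             Re (cnj (fst C) * fst C) - Re (cnj (snd C) * snd C))"
  unfolding hopf_def by (simp add: cmod_power2) (simp add: power2_eq_square)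

lemma Pi_alt: "Pi_map = (\<lambda>X. (fst X, fst (snd X), 2 * Re (cnj (fst (snd (snd X))) * snd (snd (snd X))),
   2 * Im (cnj (fst (snd (snd X))) * snd (snd (snd X))),
   Re (cnj (fst (snd (snd X))) * fst (snd (snd X))) - Re (cnj (snd (snd (snd X))) * snd (snd (snd X)))))"
  by (rule ext) (simp add: Pi_map_def hopf_alt)

lemma Pi_deriv: "(Pi_map has_derivative LPi X) (at X within S)"
  unfolding Pi_alt
  apply (rule derivative_eq_intros refl)+
  apply (rule ext)
  apply (simp add: LPi_def algebra_simps)
  done

definition Gf :: "real \<Rightarrow> real \<Rightarrow> real \<Rightarrow> real \<Rightarrow> real \<Rightarrow> real \<Rightarrow> real \<Rightarrow> (real \<Rightarrow> real)
   \<Rightarrow> real \<Rightarrow> red_state \<Rightarrow> red_state" where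
  "Gf \<Omega> \<sigma> c hbar p \<omega>1 \<omega>2 Ap t Y =
    (let q = (\<omega>2 - \<omega>1) * p; \<omega> = \<omega>2 - \<omega>1;
         A = fst Y; B = fst (snd Y); x = fst (snd (snd Y)); y = fst (snd (snd (snd Y)));
         z = snd (snd (snd (snd Y)));
         k = q / (c * hbar) * (A + Ap t)
     in (B, - (\<Omega>\<^sup>2) * A - \<sigma> * B + c * q * y, \<omega> * y - 2 * k * z, - \<omega> * x, 2 * k * x))"

lemma LPi_field:
  assumes "c \<noteq> 0" "hbar \<noteq> 0"
  shows "LPi X (MB_field \<Omega> \<sigma> c hbar p \<omega>1 \<omega>2 Ap t X) = Gf \<Omega> \<sigma> c hbar p \<omega>1 \<omega>2 Ap t (Pi_map X)"
proof -
  obtain A B a1 b1 a2 b2 where X: "X = (A, B, Complex a1 b1, Complex a2 b2)"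
    by (metis complex.exhaust prod.exhaust)
  show ?thesis
    unfolding X LPi_def MB_field_def Gf_def Pi_alt Let_def
    using assms
    apply (simp add: Re_divide Im_divide power2_eq_square)
    apply (simp add: field_simps)
    done
qed

lemma phase_exists:
  assumes u: "cmod u = 1"
  shows "\<exists>\<theta>\<in>{0..2*pi}. u = exp (\<i> * complex_of_real \<theta>)"
proof -
  have u0: "u \<noteq> 0" using u by auto
  have e: "exp (\<i> * complex_of_real (Arg u)) = u"
    using cis_Arg[OF u0] u by (simp add: cis_conv_exp sgn_div_norm)
  show ?thesis
  proof (cases "Arg u \<ge> 0")
    case True
    then show ?thesis using Arg_bounded[of u] e by (intro bexI[of _ "Arg u"]) auto
  next
    case False
    have "exp (\<i> * complex_of_real (Arg u + 2 * pi)) = exp (\<i> * complex_of_real (Arg u) + \<i> * (of_int 1 * (of_real pi * 2)))"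
      by (simp add: algebra_simps)
    also have "\<dots> = u" using e by (simp add: exp_add)
    finally show ?thesis using Arg_bounded[of u] False by (intro bexI[of _ "Arg u + 2*pi"]) auto
  qed
qed

lemma hopf_fibre:
  assumes "C \<in> S3" "C' \<in> S3" "hopf C = hopf C'"
  shows "\<exists>u. cmod u = 1 \<and> fst C' = u * fst C \<and> snd C' = u * snd C"
proof -
  obtain c1 c2 where C: "C = (c1, c2)" by (cases C)
  obtain d1 d2 where C': "C' = (d1, d2)" by (cases C')
  have s1: "(cmod c1)\<^sup>2 + (cmod c2)\<^sup>2 = 1" using assms(1) C by (simp add: S3_def)
  have s2: "(cmod d1)\<^sup>2 + (cmod d2)\<^sup>2 = 1" using assms(2) C' by (simp add: S3_def)
  have h: "2 * Re (cnj c1 * c2) = 2 * Re (cnj d1 * d2)" "2 * Im (cnj c1 * c2) = 2 * Im (cnj d1 * d2)"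
     "(cmod c1)\<^sup>2 - (cmod c2)\<^sup>2 = (cmod d1)\<^sup>2 - (cmod d2)\<^sup>2"
    using assms(3) C C' by (simp_all add: hopf_def)
  have w: "cnj c1 * c2 = cnj d1 * d2" using h(1,2) by (simp add: complex_eq_iff)
  have n1: "cmod c1 = cmod d1"
  proof -
    have "(cmod c1)\<^sup>2 = (cmod d1)\<^sup>2" using h(3) s1 s2 by linarith
    then show ?thesis by (simp add: power2_eq_iff_nonneg)
  qed
  have n2: "cmod c2 = cmod d2"
  proof -
    have "(cmod c2)\<^sup>2 = (cmod d2)\<^sup>2" using h(3) s1 s2 by linarith
    then show ?thesis by (simp add: power2_eq_iff_nonneg)
  qed
  show ?thesis
  proof (cases "c1 = 0")
    case False
    define u where "u = d1 / c1"
    have "cmod u = cmod c1 / cmod c1" by (simp add: u_def norm_divide n1)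
    then have un: "cmod u = 1" using False by simp
    have d1: "d1 = u * c1" using False by (simp add: u_def)
    have "cnj u * u = 1" using un
      by (metis complex_norm_square mult.commute of_real_1 power_one)
    have "cnj c1 * c2 = cnj u * cnj c1 * d2" using w d1 by simp
    then have "u * (cnj c1 * c2) = (u * cnj u) * cnj c1 * d2" by (simp add: mult.assoc)
    also have "u * cnj u = 1" using \<open>cnj u * u = 1\<close> by (simp add: mult.commute)
    finally have "cnj c1 * (u * c2) = cnj c1 * d2" by (simp add: algebra_simps)
    then have "d2 = u * c2" using False by simp
    then show ?thesis using un d1 C C' by auto
  next
    case True
    then have "d1 = 0" using n1 by simp
    have "(cmod c2)\<^sup>2 = 1" using s1 True by simp
    then have "cmod c2 = 1" by (metis abs_norm_cancel abs_square_eq_1)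
    then have c20: "c2 \<noteq> 0" by auto
    define u where "u = d2 / c2"
    have un: "cmod u = 1" using n2 \<open>cmod c2 = 1\<close> by (simp add: u_def norm_divide)
    have "d2 = u * c2" using c20 by (simp add: u_def)
    then show ?thesis using un True \<open>d1 = 0\<close> C C' by auto
  qed
qed

lemma hopf_surj:
  assumes "(x, y, z) \<in> S2"
  shows "\<exists>C\<in>S3. hopf C = (x, y, z)"
proof -
  have s: "x\<^sup>2 + y\<^sup>2 + z\<^sup>2 = 1" using assms by (simp add: S2_def)
  show ?thesis
  proof (cases "z = -1")
    case True
    then have "x\<^sup>2 + y\<^sup>2 = 0" using s by simp
    then have "x = 0" "y = 0" by (simp_all add: sum_power2_eq_zero_iff)
    then show ?thesis using True
      by (intro bexI[of _ "(0, 1)"]) (auto simp: hopf_def S3_def)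
  next
    case False
    have "z\<^sup>2 \<le> 1" using s by (smt (verit) zero_le_power2)
    then have "\<bar>z\<bar> \<le> 1" by (simp add: abs_square_le_1)
    then have "z \<ge> -1" by linarith
    then have zp: "1 + z > 0" using False by simp
    define r where "r = sqrt ((1 + z) / 2)"
    have r0: "r > 0" using zp by (simp add: r_def)
    have r2: "r\<^sup>2 = (1 + z) / 2" using zp by (simp add: r_def)
    define c1 where "c1 = complex_of_real r"
    define c2 where "c2 = Complex x y / complex_of_real (2 * r)"
    have w: "cnj c1 * c2 = Complex (x/2) (y/2)"
      using r0 by (simp add: c1_def c2_def complex_eq_iff Re_divide Im_divide power2_eq_square)
    have m1: "(cmod c1)\<^sup>2 = (1 + z) / 2" using r2 by (simp add: c1_def)
    have m2: "(cmod c2)\<^sup>2 = (x\<^sup>2 + y\<^sup>2) / (4 * r\<^sup>2)"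
      using r0 by (simp add: c2_def norm_divide power_divide cmod_power2 power_mult_distrib)
    also have "\<dots> = (1 - z) / 2"
    proof -
      have xy: "x\<^sup>2 + y\<^sup>2 = 1 - z\<^sup>2" using s by linarith
      have f: "1 - z\<^sup>2 = (1 - z) * (1 + z)" by (simp add: power2_eq_square algebra_simps)
      have "4 * r\<^sup>2 = 2 * (1 + z)" using r2 by simp
      then show ?thesis using zp unfolding xy f by (simp add: field_simps)
    qed
    finally have m2: "(cmod c2)\<^sup>2 = (1 - z) / 2" .
    have "hopf (c1, c2) = (x, y, z)"
      unfolding hopf_def fst_conv snd_conv w m1 m2 by (simp add: field_simps)
    moreover have "(c1, c2) \<in> S3" unfolding S3_def by (simp add: m1 m2 field_simps)
    ultimately show ?thesis by blast
  qed
qed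

lemma ode_zero:
  fixes f g :: "real \<Rightarrow> real"
  assumes d: "\<And>t. t \<ge> 0 \<Longrightarrow> (f has_derivative (\<lambda>h. h * g t)) (at t within {0..})"
    and b: "\<And>t. t \<ge> 0 \<Longrightarrow> g t \<le> K * f t"
    and nn: "\<And>t. t \<ge> 0 \<Longrightarrow> f t \<ge> 0"
    and z: "f 0 = 0"
    and t: "t \<ge> 0"
  shows "f t = 0"
proof -
  define e where "e s = f s * exp (- K * s)" for s
  have de: "(e has_derivative (\<lambda>h. h * (g s * exp (- K * s) - K * f s * exp (- K * s)))) (at s within {0..t})"
    if "0 \<le> s" "s \<le> t" for s
  proof -
    have "(f has_derivative (\<lambda>h. h * g s)) (at s within {0..t})"
      by (rule has_derivative_subset[OF d]) (use that in auto)
    then show ?thesis unfolding e_def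
      by (auto intro!: derivative_eq_intros simp: algebra_simps)
  qed
  obtain s where s: "s \<in> {0..t}"
    and eq: "e t - e 0 = (t - 0) * (g s * exp (- K * s) - K * f s * exp (- K * s))"
    using mvt_very_simple[OF t de] by blast
  have "g s * exp (- K * s) - K * f s * exp (- K * s) = (g s - K * f s) * exp (- K * s)"
    by (simp add: algebra_simps)
  also have "\<dots> \<le> 0" using b[of s] s by (intro mult_nonpos_nonneg) auto
  finally have "e t \<le> 0" using eq t z by (simp add: e_def mult_nonneg_nonpos)
  then have "f t \<le> 0" by (simp add: e_def mult_le_0_iff)
  then show ?thesis using nn[OF t] by simp
qed

lemma mab_le: "(m::real) * a * b \<le> \<bar>m\<bar> * (a\<^sup>2 + b\<^sup>2) / 2"
proof -
  have "\<bar>a * b\<bar> \<le> (a\<^sup>2 + b\<^sup>2) / 2"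
  proof -
    have "0 \<le> (\<bar>a\<bar> - \<bar>b\<bar>)\<^sup>2" by simp
    then show ?thesis by (simp add: power2_eq_square algebra_simps abs_mult)
  qed
  then have "\<bar>m\<bar> * \<bar>a * b\<bar> \<le> \<bar>m\<bar> * ((a\<^sup>2 + b\<^sup>2) / 2)" by (rule mult_left_mono) simp
  moreover have "m * a * b \<le> \<bar>m\<bar> * \<bar>a * b\<bar>"
    by (metis abs_ge_self abs_mult mult.assoc)
  ultimately show ?thesis by simp
qed

lemma key_ineq:
  assumes "Y2 \<in> red_space" "\<sigma> \<ge> 0"
  shows "inner (Y1 - Y2) (Gf \<Omega> \<sigma> c hbar p \<omega>1 \<omega>2 Ap t Y1 - Gf \<Omega> \<sigma> c hbar p \<omega>1 \<omega>2 Ap t Y2)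
     \<le> (\<bar>1 - \<Omega>\<^sup>2\<bar> + \<bar>c * ((\<omega>2 - \<omega>1) * p)\<bar> + 2 * \<bar>(\<omega>2 - \<omega>1) * p / (c * hbar)\<bar>) * inner (Y1 - Y2) (Y1 - Y2)"
proof -
  obtain A1 B1 x1 y1 z1 where Y1: "Y1 = (A1, B1, x1, y1, z1)" by (metis prod.exhaust)
  obtain A2 B2 x2 y2 z2 where Y2: "Y2 = (A2, B2, x2, y2, z2)" by (metis prod.exhaust)
  have s: "x2\<^sup>2 + y2\<^sup>2 + z2\<^sup>2 = 1" using assms(1) Y2 by (simp add: red_space_def S2_def)
  have "x2\<^sup>2 \<le> 1" using s by (smt (verit) zero_le_power2)
  then have bx: "\<bar>x2\<bar> \<le> 1" by (simp add: abs_square_le_1)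
  have "z2\<^sup>2 \<le> 1" using s by (smt (verit) zero_le_power2)
  then have bz: "\<bar>z2\<bar> \<le> 1" by (simp add: abs_square_le_1)
  define q where "q = (\<omega>2 - \<omega>1) * p"
  define \<kappa> where "\<kappa> = q / (c * hbar)"
  define dA where "dA = A1 - A2"
  define dB where "dB = B1 - B2"
  define dx where "dx = x1 - x2"
  define dy where "dy = y1 - y2"
  define dz where "dz = z1 - z2"
  have eq: "inner (Y1 - Y2) (Gf \<Omega> \<sigma> c hbar p \<omega>1 \<omega>2 Ap t Y1 - Gf \<Omega> \<sigma> c hbar p \<omega>1 \<omega>2 Ap t Y2)
     = (1 - \<Omega>\<^sup>2) * dA * dB - \<sigma> * dB\<^sup>2 + (c * q) * dB * dy + (- 2 * \<kappa> * z2) * dA * dx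
       + (2 * \<kappa> * x2) * dA * dz"
    unfolding Y1 Y2 Gf_def Let_def q_def[symmetric] \<kappa>_def[symmetric] dA_def dB_def dx_def dy_def dz_def
    by (simp add: algebra_simps power2_eq_square)
  have D: "inner (Y1 - Y2) (Y1 - Y2) = dA\<^sup>2 + dB\<^sup>2 + dx\<^sup>2 + dy\<^sup>2 + dz\<^sup>2"
    unfolding Y1 Y2 dA_def dB_def dx_def dy_def dz_def by (simp add: power2_eq_square)
  define \<alpha> where "\<alpha> = \<bar>1 - \<Omega>\<^sup>2\<bar>"
  define \<beta> where "\<beta> = \<bar>c * q\<bar>"
  define \<gamma> where "\<gamma> = \<bar>\<kappa>\<bar>"
  have t1: "(1 - \<Omega>\<^sup>2) * dA * dB \<le> \<alpha> * (dA\<^sup>2 + dB\<^sup>2) / 2" unfolding \<alpha>_def by (rule mab_le)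
  have t2: "(c * q) * dB * dy \<le> \<beta> * (dB\<^sup>2 + dy\<^sup>2) / 2" unfolding \<beta>_def by (rule mab_le)
  have t3: "(- 2 * \<kappa> * z2) * dA * dx \<le> \<gamma> * (dA\<^sup>2 + dx\<^sup>2)"
  proof -
    have "(- 2 * \<kappa> * z2) * dA * dx \<le> \<bar>- 2 * \<kappa> * z2\<bar> * (dA\<^sup>2 + dx\<^sup>2) / 2" by (rule mab_le)
    also have "\<bar>- 2 * \<kappa> * z2\<bar> \<le> 2 * \<gamma>" using bz unfolding \<gamma>_def
      by (simp add: abs_mult mult_left_le)
    then have "\<bar>- 2 * \<kappa> * z2\<bar> * (dA\<^sup>2 + dx\<^sup>2) / 2 \<le> 2 * \<gamma> * (dA\<^sup>2 + dx\<^sup>2) / 2"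
      by (intro divide_right_mono mult_right_mono) auto
    finally show ?thesis by simp
  qed
  have t4: "(2 * \<kappa> * x2) * dA * dz \<le> \<gamma> * (dA\<^sup>2 + dz\<^sup>2)"
  proof -
    have "(2 * \<kappa> * x2) * dA * dz \<le> \<bar>2 * \<kappa> * x2\<bar> * (dA\<^sup>2 + dz\<^sup>2) / 2" by (rule mab_le)
    also have "\<bar>2 * \<kappa> * x2\<bar> \<le> 2 * \<gamma>" using bx unfolding \<gamma>_def
      by (simp add: abs_mult mult_left_le)
    then have "\<bar>2 * \<kappa> * x2\<bar> * (dA\<^sup>2 + dz\<^sup>2) / 2 \<le> 2 * \<gamma> * (dA\<^sup>2 + dz\<^sup>2) / 2"
      by (intro divide_right_mono mult_right_mono) auto
    finally show ?thesis by simp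
  qed
  have t0: "\<sigma> * dB\<^sup>2 \<ge> 0" using assms(2) by simp
  have p: "\<alpha> \<ge> 0" "\<beta> \<ge> 0" "\<gamma> \<ge> 0" unfolding \<alpha>_def \<beta>_def \<gamma>_def by auto
  have sq: "dA\<^sup>2 \<ge> 0" "dB\<^sup>2 \<ge> 0" "dx\<^sup>2 \<ge> 0" "dy\<^sup>2 \<ge> 0" "dz\<^sup>2 \<ge> 0" by auto
  have m: "\<alpha> * dA\<^sup>2 \<ge> 0" "\<alpha> * dB\<^sup>2 \<ge> 0" "\<beta> * dB\<^sup>2 \<ge> 0" "\<beta> * dy\<^sup>2 \<ge> 0" "\<beta> * dA\<^sup>2 \<ge> 0"
     "\<beta> * dx\<^sup>2 \<ge> 0" "\<beta> * dz\<^sup>2 \<ge> 0" "\<alpha> * dx\<^sup>2 \<ge> 0" "\<alpha> * dy\<^sup>2 \<ge> 0" "\<alpha> * dz\<^sup>2 \<ge> 0"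
     "\<gamma> * dB\<^sup>2 \<ge> 0" "\<gamma> * dy\<^sup>2 \<ge> 0" "\<gamma> * dx\<^sup>2 \<ge> 0" "\<gamma> * dz\<^sup>2 \<ge> 0" "\<gamma> * dA\<^sup>2 \<ge> 0"
    using p sq by auto
  have "(1 - \<Omega>\<^sup>2) * dA * dB - \<sigma> * dB\<^sup>2 + (c * q) * dB * dy + (- 2 * \<kappa> * z2) * dA * dx
       + (2 * \<kappa> * x2) * dA * dz \<le> (\<alpha> + \<beta> + 2 * \<gamma>) * (dA\<^sup>2 + dB\<^sup>2 + dx\<^sup>2 + dy\<^sup>2 + dz\<^sup>2)"
    using t0 t1 t2 t3 t4 m by (simp add: algebra_simps)
  then show ?thesis unfolding eq D \<alpha>_def \<beta>_def \<gamma>_def \<kappa>_def q_def .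
qed

lemma W_deriv:
  assumes "MB_solution \<Omega> \<sigma> c hbar p \<omega>1 \<omega>2 Ap Xh" "c \<noteq> 0" "hbar \<noteq> 0" "t \<ge> 0"
  shows "((\<lambda>s. Pi_map (Xh s)) has_vector_derivative Gf \<Omega> \<sigma> c hbar p \<omega>1 \<omega>2 Ap t (Pi_map (Xh t))) (at t within {0..})"
proof -
  define V where "V = MB_field \<Omega> \<sigma> c hbar p \<omega>1 \<omega>2 Ap t (Xh t)"
  have hX: "(Xh has_derivative (\<lambda>h. h *\<^sub>R V)) (at t within {0..})"
    using assms(1,4) unfolding MB_solution_def V_def has_vector_derivative_def by blast
  have "((Pi_map \<circ> Xh) has_derivative (LPi (Xh t) \<circ> (\<lambda>h. h *\<^sub>R V))) (at t within {0..})"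
    by (rule diff_chain_within[OF hX Pi_deriv])
  moreover have bl: "bounded_linear (LPi (Xh t))" by (rule has_derivative_bounded_linear[OF Pi_deriv])
  ultimately have "((\<lambda>s. Pi_map (Xh s)) has_derivative (\<lambda>h. h *\<^sub>R LPi (Xh t) V)) (at t within {0..})"
    by (simp add: o_def linear_simps(5)[OF bl])
  then show ?thesis
    unfolding has_vector_derivative_def V_def LPi_field[OF assms(2,3)] .
qed

lemma Y_deriv:
  assumes "red_solution \<Omega> \<sigma> c hbar p \<omega>1 \<omega>2 Ap Ys" "c \<noteq> 0" "hbar \<noteq> 0" "t \<ge> 0"
  shows "(Ys has_vector_derivative Gf \<Omega> \<sigma> c hbar p \<omega>1 \<omega>2 Ap t (Ys t)) (at t within {0..})"
proof -
  have R: "Ys t \<in> red_space" "\<forall>X\<in>MB_space. Pi_map X = Ys t \<longrightarrow>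
           (Ys has_vector_derivative
              frechet_derivative Pi_map (at X) (MB_field \<Omega> \<sigma> c hbar p \<omega>1 \<omega>2 Ap t X))
           (at t within {0..})"
    using assms(1,4) unfolding red_solution_def by blast+
  obtain A B x y z where Y: "Ys t = (A, B, x, y, z)" by (metis prod.exhaust)
  have "(x, y, z) \<in> S2" using R(1) Y by (simp add: red_space_def)
  then obtain C where C: "C \<in> S3" "hopf C = (x, y, z)" using hopf_surj by blast
  define X where "X = (A, B, C)"
  have XM: "X \<in> MB_space" using C by (simp add: X_def MB_space_def)
  have PX: "Pi_map X = Ys t" using C Y by (simp add: X_def Pi_map_def)
  have "frechet_derivative Pi_map (at X) = LPi X"
    using frechet_derivative_at[OF Pi_deriv[of X UNIV]] by simp
  then show ?thesis using R(2) XM PX LPi_field[OF assms(2,3)] by metis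
qed

theorem lemma3p2:
  fixes \<Omega> \<sigma> c hbar p \<omega>1 \<omega>2 T :: real
    and Ap :: "real \<Rightarrow> real"
    and Ys :: "real \<Rightarrow> red_state"
    and Xh :: "real \<Rightarrow> mb_state"
  assumes "\<Omega> > 0" "\<sigma> > 0" "c > 0" "hbar > 0" "p > 0" "\<omega>2 > \<omega>1"
    and "continuous_on {0..} Ap"
    and "T > 0"
    and "red_solution \<Omega> \<sigma> c hbar p \<omega>1 \<omega>2 Ap Ys"
    and "\<forall>t\<ge>0. Ys (t + T) = Ys t"
    and "MB_solution \<Omega> \<sigma> c hbar p \<omega>1 \<omega>2 Ap Xh"
    and "Pi_map (Xh 0) = Ys 0"
  shows "\<forall>t\<ge>0.
      fst (Xh (t + T)) = fst (Xh t) \<and>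
      fst (snd (Xh (t + T))) = fst (snd (Xh t)) \<and>
      2 * ((\<omega>2 - \<omega>1) * p) * Im (cnj (fst (snd (snd (Xh (t + T))))) * snd (snd (snd (Xh (t + T)))))
        = 2 * ((\<omega>2 - \<omega>1) * p) * Im (cnj (fst (snd (snd (Xh t)))) * snd (snd (snd (Xh t)))) \<and>
      (cmod (snd (snd (snd (Xh (t + T))))))\<^sup>2 - (cmod (fst (snd (snd (Xh (t + T))))))\<^sup>2
        = (cmod (snd (snd (snd (Xh t)))))\<^sup>2 - (cmod (fst (snd (snd (Xh t)))))\<^sup>2 \<and>
      (\<exists>\<theta>\<in>{0..2*pi}.
         fst (snd (snd (Xh (t + T)))) = exp (\<i> * complex_of_real \<theta>) * fst (snd (snd (Xh t))) \<and>
         snd (snd (snd (Xh (t + T)))) = exp (\<i> * complex_of_real \<theta>) * snd (snd (snd (Xh t))))"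
proof -
  define K where "K = \<bar>1 - \<Omega>\<^sup>2\<bar> + \<bar>c * ((\<omega>2 - \<omega>1) * p)\<bar> + 2 * \<bar>(\<omega>2 - \<omega>1) * p / (c * hbar)\<bar>"
  define G where "G = Gf \<Omega> \<sigma> c hbar p \<omega>1 \<omega>2 Ap"
  define W where "W s = Pi_map (Xh s)" for s
  define f where "f s = inner (W s - Ys s) (W s - Ys s)" for s
  have c0: "c \<noteq> 0" "hbar \<noteq> 0" using assms by auto
  have fd: "(f has_derivative (\<lambda>h. h * (2 * inner (W s - Ys s) (G s (W s) - G s (Ys s))))) (at s within {0..})"
    if s: "s \<ge> 0" for s
  proof -
    have "((\<lambda>s. W s - Ys s) has_vector_derivative (G s (W s) - G s (Ys s))) (at s within {0..})"
      using W_deriv[OF assms(11) c0 s] Y_deriv[OF assms(9) c0 s] unfolding W_def G_def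
      by (rule has_vector_derivative_diff)
    then have hd: "((\<lambda>s. W s - Ys s) has_derivative (\<lambda>h. h *\<^sub>R (G s (W s) - G s (Ys s)))) (at s within {0..})"
      unfolding has_vector_derivative_def .
    have "(f has_derivative (\<lambda>h. inner (W s - Ys s) (h *\<^sub>R (G s (W s) - G s (Ys s)))
        + inner (h *\<^sub>R (G s (W s) - G s (Ys s))) (W s - Ys s))) (at s within {0..})"
      unfolding f_def by (rule has_derivative_inner[OF hd hd])
    moreover have "(\<lambda>h. inner (W s - Ys s) (h *\<^sub>R (G s (W s) - G s (Ys s)))
        + inner (h *\<^sub>R (G s (W s) - G s (Ys s))) (W s - Ys s))
       = (\<lambda>h. h * (2 * inner (W s - Ys s) (G s (W s) - G s (Ys s))))"
      by (auto simp: fun_eq_iff inner_commute)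
    ultimately show ?thesis by simp
  qed
  have fb: "2 * inner (W s - Ys s) (G s (W s) - G s (Ys s)) \<le> (2 * K) * f s" if s: "s \<ge> 0" for s
  proof -
    have rs: "Ys s \<in> red_space" using assms(9) s unfolding red_solution_def by blast
    have "inner (W s - Ys s) (G s (W s) - G s (Ys s)) \<le> K * f s"
      unfolding G_def f_def K_def by (rule key_ineq[OF rs]) (use assms(2) in simp)
    then show ?thesis by simp
  qed
  have f0: "f 0 = 0" using assms(12) by (simp add: f_def W_def)
  have fz: "f s = 0" if "s \<ge> 0" for s
    by (rule ode_zero[OF fd fb _ f0 that]) (simp_all add: f_def)
  have WY: "Pi_map (Xh s) = Ys s" if "s \<ge> 0" for s
    using fz[OF that] by (simp add: f_def W_def)
  show ?thesis
  proof (intro allI impI)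
    fix t :: real assume t: "t \<ge> 0"
    have eq: "Pi_map (Xh (t + T)) = Pi_map (Xh t)"
      using WY[of "t + T"] WY[of t] assms(8,10) t by simp
    obtain A B c1 c2 where X1: "Xh t = (A, B, c1, c2)" by (metis prod.exhaust)
    obtain A' B' d1 d2 where X2: "Xh (t + T) = (A', B', d1, d2)" by (metis prod.exhaust)
    have S: "(c1, c2) \<in> S3" "(d1, d2) \<in> S3"
      using assms(11) t X1 X2 assms(8) unfolding MB_solution_def MB_space_def
      by (metis mem_Times_iff snd_conv less_le_not_le order.trans add_nonneg_nonneg)+
    have e: "A' = A" "B' = B" "hopf (d1, d2) = hopf (c1, c2)"
      using eq X1 X2 by (simp_all add: Pi_map_def)
    have h: "Im (cnj d1 * d2) = Im (cnj c1 * c2)" "(cmod d1)\<^sup>2 - (cmod d2)\<^sup>2 = (cmod c1)\<^sup>2 - (cmod c2)\<^sup>2"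
      using e(3) by (simp_all add: hopf_def)
    obtain u where u: "cmod u = 1" "d1 = u * c1" "d2 = u * c2"
      using hopf_fibre[OF S(1) S(2) e(3)[symmetric]] by auto
    obtain \<theta> where th: "\<theta> \<in> {0..2*pi}" "u = exp (\<i> * complex_of_real \<theta>)"
      using phase_exists[OF u(1)] by blast
    show "fst (Xh (t + T)) = fst (Xh t) \<and>
      fst (snd (Xh (t + T))) = fst (snd (Xh t)) \<and>
      2 * ((\<omega>2 - \<omega>1) * p) * Im (cnj (fst (snd (snd (Xh (t + T))))) * snd (snd (snd (Xh (t + T)))))
        = 2 * ((\<omega>2 - \<omega>1) * p) * Im (cnj (fst (snd (snd (Xh t)))) * snd (snd (snd (Xh t)))) \<and>
      (cmod (snd (snd (snd (Xh (t + T))))))\<^sup>2 - (cmod (fst (snd (snd (Xh (t + T))))))\<^sup>2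
        = (cmod (snd (snd (snd (Xh t)))))\<^sup>2 - (cmod (fst (snd (snd (Xh t)))))\<^sup>2 \<and>
      (\<exists>\<theta>\<in>{0..2*pi}.
         fst (snd (snd (Xh (t + T)))) = exp (\<i> * complex_of_real \<theta>) * fst (snd (snd (Xh t))) \<and>
         snd (snd (snd (Xh (t + T)))) = exp (\<i> * complex_of_real \<theta>) * snd (snd (snd (Xh t))))"
      unfolding X1 X2 using e h u th by auto
  qed
qed

end
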